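(* Let $G$ and $H$ be connected graphs, each with at least $3$ vertices, let $\ell_1=\lambda_3(G)$, $\ell_2=\lambda_3(H)$, $n_2=|V(H)|$. Let $S=\{x,y,z\}$ be a set of three vertices of $G\circ H$ lying in three pairwise distinct $H$-layers. Then $G\circ H$ contains at least $\ell_2+\ell_1 n_2$ pairwise edge-disjoint $S$-trees.
   Context: For a graph $G$ and $S\subseteq V(G)$ with $|S|\ge 2$, an $S$-tree is a subgraph that is a tree containing all vertices of $S$; $\lambda(S)$ is the maximum number of pairwise edge-disjoint $S$-trees, and $\lambda_3(G)=\min\{\lambda(S): |S|=3\}$. The lexicographic product $G\circ H$ has vertex set $V(G)\times V(H)$, and $(u,v)$ is adjacent to $(u',v')$ iff either $uu'\in E(G)$, or $u=u'$ and $vv'\in E(H)$. For $u\in V(G)$, the $H$-layer $H(u)$ is the vertex set $\{(u,v): v\in V(H)\}$. *)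

theory Defs
  imports Main
begin

definition graph :: "'a set \<Rightarrow> 'a set set \<Rightarrow> bool" where
  "graph V E \<longleftrightarrow> finite V \<and> (\<forall>e\<in>E. \<exists>u v. e = {u, v} \<and> u \<noteq> v \<and> u \<in> V \<and> v \<in> V)"

definition adj_rel :: "'a set set \<Rightarrow> ('a \<times> 'a) set" where
  "adj_rel E = {(u, w). {u, w} \<in> E}"

definition connected_graph :: "'a set \<Rightarrow> 'a set set \<Rightarrow> bool" where
  "connected_graph V E \<longleftrightarrow> V \<noteq> {} \<and> (\<forall>u\<in>V. \<forall>w\<in>V. (u, w) \<in> (adj_rel E)\<^sup>*)"

definition is_cycle :: "'a set set \<Rightarrow> 'a list \<Rightarrow> bool" where
  "is_cycle E cs \<longleftrightarrow> distinct cs \<and> length cs \<ge> 3 \<and>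
     (\<forall>i < length cs. {cs ! i, cs ! ((i + 1) mod length cs)} \<in> E)"

definition acyclic_graph :: "'a set set \<Rightarrow> bool" where
  "acyclic_graph E \<longleftrightarrow> \<not> (\<exists>cs. is_cycle E cs)"

definition subgraph :: "'a set \<Rightarrow> 'a set set \<Rightarrow> 'a set \<Rightarrow> 'a set set \<Rightarrow> bool" where
  "subgraph V' E' V E \<longleftrightarrow> V' \<subseteq> V \<and> E' \<subseteq> E \<and> (\<forall>e\<in>E'. e \<subseteq> V')"

definition S_tree :: "'a set \<Rightarrow> 'a set set \<Rightarrow> 'a set \<Rightarrow> 'a set \<Rightarrow> 'a set set \<Rightarrow> bool" where
  "S_tree V E S V' E' \<longleftrightarrow> subgraph V' E' V E \<and> connected_graph V' E' \<and> acyclic_graph E' \<and> S \<subseteq> V'"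

definition has_edge_disjoint_S_trees :: "'a set \<Rightarrow> 'a set set \<Rightarrow> 'a set \<Rightarrow> nat \<Rightarrow> bool" where
  "has_edge_disjoint_S_trees V E S k \<longleftrightarrow>
     (\<exists>T :: nat \<Rightarrow> 'a set \<times> 'a set set.
        (\<forall>i<k. S_tree V E S (fst (T i)) (snd (T i))) \<and>
        (\<forall>i<k. \<forall>j<k. i \<noteq> j \<longrightarrow> snd (T i) \<inter> snd (T j) = {}))"

definition lambda_S :: "'a set \<Rightarrow> 'a set set \<Rightarrow> 'a set \<Rightarrow> nat" where
  "lambda_S V E S = Max {k. has_edge_disjoint_S_trees V E S k}"

definition lambda3 :: "'a set \<Rightarrow> 'a set set \<Rightarrow> nat" where
  "lambda3 V E = Min {lambda_S V E S | S. S \<subseteq> V \<and> card S = 3}"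

definition lex_V :: "'a set \<Rightarrow> 'b set \<Rightarrow> ('a \<times> 'b) set" where
  "lex_V VG VH = VG \<times> VH"

definition lex_E :: "'a set \<Rightarrow> 'a set set \<Rightarrow> 'b set \<Rightarrow> 'b set set \<Rightarrow> ('a \<times> 'b) set set" where
  "lex_E VG EG VH EH =
     {{(u, v), (u', v')} | u v u' v'. u \<in> VG \<and> u' \<in> VG \<and> v \<in> VH \<and> v' \<in> VH \<and>
        ({u, u'} \<in> EG \<or> (u = u' \<and> {v, v'} \<in> EH))}"

end

theory Submission
  imports Defs "HOL-Number_Theory.Cong"
begin


lemma adj_relI: "{u,w} \<in> E \<Longrightarrow> (u,w) \<in> adj_rel E" by (simp add: adj_rel_def)
lemma adj_relD: "(u,w) \<in> adj_rel E \<Longrightarrow> {u,w} \<in> E" by (simp add: adj_rel_def)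

lemma adj_rel_sym: "(u,w) \<in> adj_rel E \<Longrightarrow> (w,u) \<in> adj_rel E"
  by (simp add: adj_rel_def insert_commute)

lemma rtr_sym: "(u,w) \<in> (adj_rel E)\<^sup>* \<Longrightarrow> (w,u) \<in> (adj_rel E)\<^sup>*"
proof (induction rule: rtrancl_induct)
  case base then show ?case by simp
next
  case (step v w)
  then show ?case by (meson adj_rel_sym converse_rtrancl_into_rtrancl)
qed

lemma adj_rel_mono: "E \<subseteq> E' \<Longrightarrow> adj_rel E \<subseteq> adj_rel E'"
  by (auto simp: adj_rel_def)

lemma rtr_mono: "E \<subseteq> E' \<Longrightarrow> (u,w) \<in> (adj_rel E)\<^sup>* \<Longrightarrow> (u,w) \<in> (adj_rel E')\<^sup>*"
  using rtrancl_mono[OF adj_rel_mono] by blast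

lemma rtr_edge: "(s,u) \<in> (adj_rel E)\<^sup>* \<Longrightarrow> {u,w} \<in> E \<Longrightarrow> (s,w) \<in> (adj_rel E)\<^sup>*"
  by (meson adj_relI rtrancl_into_rtrancl)

lemma rtr_edge': "(s,u) \<in> (adj_rel E)\<^sup>* \<Longrightarrow> {w,u} \<in> E \<Longrightarrow> (s,w) \<in> (adj_rel E)\<^sup>*"
  by (metis insert_commute rtr_edge)

lemma is_cycle_mono: "is_cycle E cs \<Longrightarrow> E \<subseteq> E' \<Longrightarrow> is_cycle E' cs"
  unfolding is_cycle_def by blast

lemma cycle_reach:
  assumes cyc: "is_cycle F cs"
  shows "{cs!0, cs!1} \<in> F \<and> (cs!0, cs!1) \<in> (adj_rel (F - {{cs!0, cs!1}}))\<^sup>*"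
proof -
  define n where "n = length cs"
  define e where "e = {cs!0, cs!1}"
  have dist: "distinct cs" and n3: "n \<ge> 3" and ed: "\<And>i. i < n \<Longrightarrow> {cs!i, cs!((i+1) mod n)} \<in> F"
    using cyc unfolding is_cycle_def n_def by auto
  have eF: "e \<in> F" using ed[of 0] n3 unfolding e_def by simp
  have neq: "\<And>i j. i < n \<Longrightarrow> j < n \<Longrightarrow> cs!i = cs!j \<longleftrightarrow> i = j"
    using dist n_def nth_eq_iff_index_eq by blast
  have claim: "\<forall>i. 1 \<le> i \<longrightarrow> i < n \<longrightarrow> (cs!1, cs!i) \<in> (adj_rel (F - {e}))\<^sup>*"
  proof
    fix i show "1 \<le> i \<longrightarrow> i < n \<longrightarrow> (cs!1, cs!i) \<in> (adj_rel (F - {e}))\<^sup>*"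
    proof (induction i)
      case 0 then show ?case by simp
    next
      case (Suc i)
      show ?case
      proof (intro impI)
        assume a1: "1 \<le> Suc i" and a2: "Suc i < n"
        show "(cs!1, cs!Suc i) \<in> (adj_rel (F - {e}))\<^sup>*"
        proof (cases "i = 0")
          case True then show ?thesis by simp
        next
          case False
          have ih: "(cs!1, cs!i) \<in> (adj_rel (F - {e}))\<^sup>*" using Suc False a2 by simp
          have "{cs!i, cs!(Suc i)} \<in> F" using ed[of i] a2 by simp
          moreover have "{cs!i, cs!(Suc i)} \<noteq> e"
          proof
            assume "{cs!i, cs!(Suc i)} = e"
            then have "(cs!i = cs!0 \<and> cs!Suc i = cs!1) \<or> (cs!i = cs!1 \<and> cs!Suc i = cs!0)"
              unfolding e_def by (simp add: doubleton_eq_iff)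
            then show False using neq[of i 0] neq[of i 1] neq[of "Suc i" 0] neq[of "Suc i" 1] a2 False by auto
          qed
          ultimately show ?thesis using ih rtr_edge[of "cs!1" "cs!i" "F - {e}"] by blast
        qed
      qed
    qed
  qed
  have r1: "(cs!1, cs!(n-1)) \<in> (adj_rel (F - {e}))\<^sup>*" using claim[rule_format, of "n-1"] n3 by simp
  have h1: "n-1 < n" "0 < n" "1 < n" using n3 by auto
  have nn: "(n-1+1) mod n = 0" using n3 by simp
  have "{cs!(n-1), cs!((n-1+1) mod n)} \<in> F" using h1(1) by (rule ed)
  then have "{cs!(n-1), cs!0} \<in> F" unfolding nn .
  moreover have "{cs!(n-1), cs!0} \<noteq> e"
  proof
    assume "{cs!(n-1), cs!0} = e"
    then have "cs!(n-1) = cs!0 \<or> cs!(n-1) = cs!1" unfolding e_def by (auto simp: doubleton_eq_iff)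
    then have "n-1 = 0 \<or> n-1 = 1" using neq[OF h1(1) h1(2)] neq[OF h1(1) h1(3)] by blast
    then show False using n3 by linarith
  qed
  ultimately have "(cs!1, cs!0) \<in> (adj_rel (F - {e}))\<^sup>*" using rtr_edge[OF r1, of "cs!0"] by blast
  then have "(cs!0, cs!1) \<in> (adj_rel (F - {e}))\<^sup>*" by (rule rtr_sym)
  with eF show ?thesis unfolding e_def by simp
qed



lemma remove_cycle_edge:
  assumes "(c0, c1) \<in> (adj_rel (F - {{c0,c1}}))\<^sup>*" "(u,w) \<in> (adj_rel F)\<^sup>*"
  shows "(u,w) \<in> (adj_rel (F - {{c0,c1}}))\<^sup>*"
  using assms(2)
proof (induction rule: rtrancl_induct)
  case base then show ?case by simp
next
  case (step v w)
  have vw: "{v,w} \<in> F" using step.hyps(2) by (rule adj_relD)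
  show ?case
  proof (cases "{v,w} = {c0,c1}")
    case True
    then have "(v = c0 \<and> w = c1) \<or> (v = c1 \<and> w = c0)" by (simp add: doubleton_eq_iff)
    then show ?thesis
    proof
      assume h: "v = c0 \<and> w = c1"
      have "(u,c0) \<in> (adj_rel (F - {{c0,c1}}))\<^sup>*" using step.IH h by simp
      then show ?thesis using assms(1) h by (meson rtrancl_trans)
    next
      assume h: "v = c1 \<and> w = c0"
      have "(c1, c0) \<in> (adj_rel (F - {{c0,c1}}))\<^sup>*" using assms(1) by (rule rtr_sym)
      then show ?thesis using step.IH h by (meson rtrancl_trans)
    qed
  next
    case False
    then have "{v,w} \<in> F - {{c0,c1}}" using vw by simp
    then show ?thesis by (rule rtr_edge[OF step.IH])
  qed
qed

lemma extract_tree: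
  assumes "finite F" "F \<subseteq> E" "\<forall>e\<in>E. \<exists>u v. e = {u,v} \<and> u \<noteq> v \<and> u \<in> V \<and> v \<in> V"
    "s \<in> V" "\<forall>w\<in>S. (s,w) \<in> (adj_rel F)\<^sup>*" "s \<in> S"
  shows "\<exists>V' E'. S_tree V E S V' E' \<and> E' \<subseteq> F"
  using assms
proof (induction "card F" arbitrary: F rule: less_induct)
  case less
  show ?case
  proof (cases "acyclic_graph F")
    case True
    define V' where "V' = {w. (s,w) \<in> (adj_rel F)\<^sup>*}"
    define E' where "E' = {e \<in> F. e \<subseteq> V'}"
    have EF: "E' \<subseteq> F" unfolding E'_def by blast
    have reach: "(s,w) \<in> (adj_rel E')\<^sup>*" if "(s,w) \<in> (adj_rel F)\<^sup>*" for w
      using that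
    proof (induction rule: rtrancl_induct)
      case base then show ?case by simp
    next
      case (step v w)
      have vw: "{v,w} \<in> F" using step.hyps(2) by (rule adj_relD)
      have "v \<in> V'" using step.hyps(1) unfolding V'_def by simp
      moreover have "w \<in> V'" using step.hyps unfolding V'_def by simp
      ultimately have "{v,w} \<in> E'" using vw unfolding E'_def by simp
      then show ?case by (rule rtr_edge[OF step.IH])
    qed
    have VV: "V' \<subseteq> V"
    proof
      fix w assume "w \<in> V'"
      then have "(s,w) \<in> (adj_rel F)\<^sup>*" unfolding V'_def by simp
      then show "w \<in> V"
      proof (cases rule: rtranclE)
        case base then show ?thesis using less.prems(4) by simp
      next
        case (step v)
        then have "{v,w} \<in> F" by (simp add: adj_rel_def)
        then have "{v,w} \<in> E" using less.prems(2) by blast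
        then obtain u1 u2 where "{v,w} = {u1,u2}" "u1 \<in> V" "u2 \<in> V" using less.prems(3) by blast
        then show ?thesis by (auto simp: doubleton_eq_iff)
      qed
    qed
    have conn: "connected_graph V' E'"
      unfolding connected_graph_def
    proof (intro conjI ballI)
      show "V' \<noteq> {}" unfolding V'_def by auto
    next
      fix u w assume "u \<in> V'" "w \<in> V'"
      then have "(s,u) \<in> (adj_rel E')\<^sup>*" "(s,w) \<in> (adj_rel E')\<^sup>*" using reach unfolding V'_def by auto
      then show "(u,w) \<in> (adj_rel E')\<^sup>*" using rtr_sym[of s u E'] by (meson rtrancl_trans)
    qed
    have acyc: "acyclic_graph E'"
      unfolding acyclic_graph_def
    proof
      assume "\<exists>cs. is_cycle E' cs"
      then obtain cs where "is_cycle E' cs" by blast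
      then have "is_cycle F cs" using EF by (rule is_cycle_mono)
      then show False using True unfolding acyclic_graph_def by blast
    qed
    have "S \<subseteq> V'" using less.prems(5) unfolding V'_def by auto
    moreover have "subgraph V' E' V E" unfolding subgraph_def E'_def using VV less.prems(2) by auto
    ultimately have "S_tree V E S V' E'" using conn acyc unfolding S_tree_def by simp
    then show ?thesis using EF by blast
  next
    case False
    then obtain cs where cyc: "is_cycle F cs" unfolding acyclic_graph_def by blast
    have eF: "{cs!0, cs!1} \<in> F" and r: "(cs!0, cs!1) \<in> (adj_rel (F - {{cs!0, cs!1}}))\<^sup>*"
      using cycle_reach[OF cyc] by simp_all
    have S': "\<forall>w\<in>S. (s,w) \<in> (adj_rel (F - {{cs!0, cs!1}}))\<^sup>*"
    proof
      fix w assume "w \<in> S"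
      then have "(s,w) \<in> (adj_rel F)\<^sup>*" using less.prems(5) by blast
      then show "(s,w) \<in> (adj_rel (F - {{cs!0, cs!1}}))\<^sup>*" by (rule remove_cycle_edge[OF r])
    qed
    have lt: "card (F - {{cs!0, cs!1}}) < card F" using less.prems(1) eF by (rule card_Diff1_less)
    have fin: "finite (F - {{cs!0, cs!1}})" using less.prems(1) by simp
    have sub: "F - {{cs!0, cs!1}} \<subseteq> E" using less.prems(2) by blast
    have "\<exists>V' E'. S_tree V E S V' E' \<and> E' \<subseteq> F - {{cs!0, cs!1}}"
      by (rule less.hyps[OF lt fin sub less.prems(3) less.prems(4) S' less.prems(6)])
    then obtain V' E' where "S_tree V E S V' E'" "E' \<subseteq> F - {{cs!0, cs!1}}" by blast
    then have "S_tree V E S V' E' \<and> E' \<subseteq> F" by blast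
    then show ?thesis by blast
  qed
qed

lemma edge_at:
  assumes "connected_graph V' E'" "s \<in> V'" "t \<in> V'" "s \<noteq> t"
  shows "\<exists>w. {s,w} \<in> E'"
proof -
  from assms(1) have "\<forall>u\<in>V'. \<forall>w\<in>V'. (u,w) \<in> (adj_rel E')\<^sup>*" unfolding connected_graph_def by simp
  then have "(s,t) \<in> (adj_rel E')\<^sup>*" using assms(2,3) by simp
  then show ?thesis
  proof (cases rule: converse_rtranclE)
    case base then show ?thesis using assms(4) by simp
  next
    case (step w) then have "{s,w} \<in> E'" by (simp add: adj_rel_def)
    then show ?thesis by blast
  qed
qed

lemma has_mono:
  assumes "has_edge_disjoint_S_trees V E S k" "k' \<le> k"
  shows "has_edge_disjoint_S_trees V E S k'"
proof -
  obtain T where T1: "\<forall>i<k. S_tree V E S (fst (T i)) (snd (T i))"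
    and T2: "\<forall>i<k. \<forall>j<k. i \<noteq> j \<longrightarrow> snd (T i) \<inter> snd (T j) = {}"
    using assms(1) unfolding has_edge_disjoint_S_trees_def by blast
  have "\<forall>i<k'. S_tree V E S (fst (T i)) (snd (T i))" using T1 assms(2) by simp
  moreover have "\<forall>i<k'. \<forall>j<k'. i \<noteq> j \<longrightarrow> snd (T i) \<inter> snd (T j) = {}" using T2 assms(2) by simp
  ultimately show ?thesis unfolding has_edge_disjoint_S_trees_def by blast
qed

lemma graph_edge_in:
  assumes "graph V E" "{u,w} \<in> E" shows "u \<in> V \<and> w \<in> V \<and> u \<noteq> w"
proof -
  obtain u' v' where "{u,w} = {u',v'}" "u' \<noteq> v'" "u' \<in> V" "v' \<in> V"
    using assms unfolding graph_def by blast
  then show ?thesis by (auto simp: doubleton_eq_iff)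
qed

lemma has_le_deg:
  assumes g: "graph V E" and pS: "p \<in> S" and tS: "t \<in> S" "t \<noteq> p"
    and h: "has_edge_disjoint_S_trees V E S k"
  shows "k \<le> card {w. {p,w} \<in> E}"
proof -
  have "\<exists>T :: nat \<Rightarrow> 'a set \<times> 'a set set. (\<forall>i<k. S_tree V E S (fst (T i)) (snd (T i))) \<and>
        (\<forall>i<k. \<forall>j<k. i \<noteq> j \<longrightarrow> snd (T i) \<inter> snd (T j) = {})"
    using h unfolding has_edge_disjoint_S_trees_def .
  then obtain T :: "nat \<Rightarrow> 'a set \<times> 'a set set" where T1: "\<forall>i<k. S_tree V E S (fst (T i)) (snd (T i))"
    and T2: "\<forall>i<k. \<forall>j<k. i \<noteq> j \<longrightarrow> snd (T i) \<inter> snd (T j) = {}"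
    by blast
  define f where "f i = (SOME w. {p,w} \<in> snd (T i))" for i
  have fi: "{p, f i} \<in> snd (T i)" if "i < k" for i
  proof -
    have st: "S_tree V E S (fst (T i)) (snd (T i))" using T1 that by blast
    then have "connected_graph (fst (T i)) (snd (T i))" "p \<in> fst (T i)" "t \<in> fst (T i)"
      using pS tS unfolding S_tree_def by auto
    moreover have "p \<noteq> t" using tS(2) by simp
    ultimately have "\<exists>w. {p,w} \<in> snd (T i)" by (rule edge_at)
    then show ?thesis unfolding f_def by (rule someI_ex)
  qed
  have sub: "snd (T i) \<subseteq> E" if "i < k" for i
    using T1 that unfolding S_tree_def subgraph_def by blast
  have "inj_on f {0..<k}"
  proof (rule inj_onI)
    fix i j assume "i \<in> {0..<k}" "j \<in> {0..<k}" "f i = f j"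
    then have ik: "i < k" "j < k" "f i = f j" by auto
    show "i = j"
    proof (rule ccontr)
      assume "i \<noteq> j"
      then have "snd (T i) \<inter> snd (T j) = {}" using T2 ik by simp
      moreover have "{p, f i} \<in> snd (T i)" "{p, f i} \<in> snd (T j)" using fi[of i] fi[of j] ik by simp_all
      ultimately show False by blast
    qed
  qed
  moreover have "f ` {0..<k} \<subseteq> {w. {p,w} \<in> E}"
  proof
    fix w assume "w \<in> f ` {0..<k}"
    then obtain i where "i < k" "w = f i" by auto
    then show "w \<in> {w. {p,w} \<in> E}" using fi[of i] sub[of i] by auto
  qed
  moreover have "finite {w. {p,w} \<in> E}"
  proof (rule finite_subset)
    show "{w. {p,w} \<in> E} \<subseteq> V"
    proof
      fix w assume "w \<in> {w. {p,w} \<in> E}"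
      then have "{p,w} \<in> E" by simp
      from graph_edge_in[OF g this] show "w \<in> V" by simp
    qed
    show "finite V" using g unfolding graph_def by simp
  qed
  ultimately have "card {0..<k} \<le> card {w. {p,w} \<in> E}" by (rule card_inj_on_le)
  then show ?thesis by simp
qed

lemma lambdaS_props:
  assumes g: "graph V E" and pS: "p \<in> S" and tS: "t \<in> S" "t \<noteq> p"
  shows "has_edge_disjoint_S_trees V E S (lambda_S V E S) \<and> lambda_S V E S \<le> card {w. {p,w} \<in> E}"
proof -
  let ?K = "{k. has_edge_disjoint_S_trees V E S k}"
  have "?K \<subseteq> {..card {w. {p,w} \<in> E}}" using has_le_deg[OF g pS tS] by auto
  then have fin: "finite ?K" by (rule finite_subset) simp
  have ne: "0 \<in> ?K" unfolding has_edge_disjoint_S_trees_def by simp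
  have "?K \<noteq> {}" using ne by blast
  then have "lambda_S V E S \<in> ?K" unfolding lambda_S_def using fin Max_in by blast
  then show ?thesis using has_le_deg[OF g pS tS] by simp
qed

lemma lambda3_le:
  assumes g: "graph V E" and "S \<subseteq> V" "card S = 3"
  shows "lambda3 V E \<le> lambda_S V E S"
proof -
  have "finite V" using g unfolding graph_def by simp
  have "{S. S \<subseteq> V \<and> card S = 3} \<subseteq> Pow V" by auto
  then have "finite {S. S \<subseteq> V \<and> card S = 3}" by (rule finite_subset) (simp add: \<open>finite V\<close>)
  then have "finite {lambda_S V E S | S. S \<subseteq> V \<and> card S = 3}" by (rule finite_image_set)
  moreover have "lambda_S V E S \<in> {lambda_S V E S | S. S \<subseteq> V \<and> card S = 3}" using assms by blast
  ultimately show ?thesis unfolding lambda3_def by (rule Min_le)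
qed



lemma mod_cancel_k:
  assumes "k < (M::nat)" "k' < M" "(k + c) mod M = (k' + c) mod M"
  shows "k = k'"
proof -
  have "[k + c = k' + c] (mod M)" using assms(3) unfolding cong_def .
  then have "[k = k'] (mod M)" by (simp add: cong_add_rcancel_nat)
  then have "k mod M = k' mod M" unfolding cong_def .
  then show ?thesis using assms(1,2) by simp
qed

lemma mod_cancel_c:
  assumes "(k + c) mod (M::nat) = (k + c') mod M"
  shows "c mod M = c' mod M"
proof -
  have "[k + c = k + c'] (mod M)" using assms unfolding cong_def .
  then have "[c = c'] (mod M)" by (simp add: cong_add_lcancel_nat)
  then show ?thesis unfolding cong_def .
qed

lemma suc_mod_ne:
  assumes "(M::nat) \<ge> 2" shows "Suc c mod M \<noteq> c mod M"
proof
  assume h: "Suc c mod M = c mod M"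
  have "[Suc c = c] (mod M)" using h unfolding cong_def .
  then have "[c + 1 = c + 0] (mod M)" by simp
  then have "[1 = 0] (mod M)" by (simp only: cong_add_lcancel_nat)
  then have "1 mod M = 0" unfolding cong_def by simp
  then show False using assms by simp
qed

lemma bij_extend:
  assumes fin: "finite V" and j0: "j0 \<in> V" and p: "p \<in> V" and D: "D \<subseteq> V - {j0}"
    and N: "N \<subseteq> V - {p}" and cd: "card D \<le> card N"
  shows "\<exists>\<theta>. bij_betw \<theta> V V \<and> \<theta> j0 = p \<and> \<theta> ` D \<subseteq> N"
proof -
  have finD: "finite D" using fin D by (meson finite_Diff finite_subset)
  have finN: "finite N" using fin N by (meson finite_Diff finite_subset)
  obtain N' where N'1: "N' \<subseteq> N" and N'2: "card N' = card D" and N'3: "finite N'"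
    using obtain_subset_with_card_n[OF cd] by metis
  have "card D = card N'" using N'2 by simp
  then obtain f1 where f1: "bij_betw f1 D N'" using finite_same_card_bij[OF finD N'3] by blast
  define A where "A = V - insert j0 D"
  define B where "B = V - insert p N'"
  have j0D: "j0 \<notin> D" using D by blast
  have pN': "p \<notin> N'" using N N'1 by blast
  have s1: "insert j0 D \<subseteq> V" using D j0 by blast
  have s2: "insert p N' \<subseteq> V" using N N'1 p by blast
  have cA: "card A = card V - Suc (card D)"
    unfolding A_def using card_Diff_subset[OF _ s1] finD j0D by simp
  have cB: "card B = card V - Suc (card N')"
    unfolding B_def using card_Diff_subset[OF _ s2] N'3 pN' by simp
  have "card A = card B" using cA cB N'2 by simp
  moreover have "finite A" "finite B" unfolding A_def B_def using fin by auto
  ultimately obtain f2 where f2: "bij_betw f2 A B" using finite_same_card_bij by blast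
  define \<theta> where "\<theta> x = (if x = j0 then p else if x \<in> D then f1 x else f2 x)" for x
  have f1N: "f1 x \<in> N'" if "x \<in> D" for x using f1 that bij_betwE by blast
  have f2B: "f2 x \<in> B" if "x \<in> A" for x using f2 that bij_betwE by blast
  have i1: "inj_on f1 D" using f1 bij_betw_def by blast
  have i2: "inj_on f2 A" using f2 bij_betw_def by blast
  have inA: "x \<in> A" if "x \<in> V" "x \<noteq> j0" "x \<notin> D" for x using that unfolding A_def by blast
  have BN: "y \<notin> N'" "y \<noteq> p" "y \<in> V" if "y \<in> B" for y using that unfolding B_def by auto
  have inj: "inj_on \<theta> V"
  proof (rule inj_onI)
    fix x y assume x: "x \<in> V" and y: "y \<in> V" and e: "\<theta> x = \<theta> y"
    show "x = y"
    proof (cases "x = j0")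
      case True
      then show ?thesis
        using e f1N[of y] f2B[of y] inA[OF y] BN[of "f2 y"] pN' unfolding \<theta>_def by (auto split: if_splits)
    next
      case xj: False
      show ?thesis
      proof (cases "x \<in> D")
        case True
        then show ?thesis using e xj f1N[of x] f1N[of y] f2B[of y] inA[OF y] BN[of "f2 y"] pN' i1
          unfolding \<theta>_def inj_on_def by (auto split: if_splits)
      next
        case False
        then show ?thesis using e xj f1N[of y] f2B[of y] f2B[of x] inA[OF y] inA[OF x] BN[of "f2 y"]
            BN[of "f2 x"] pN' i2
          unfolding \<theta>_def inj_on_def by (auto split: if_splits)
      qed
    qed
  qed
  have sub: "\<theta> ` V \<subseteq> V"
  proof
    fix y assume "y \<in> \<theta> ` V"
    then obtain x where x: "x \<in> V" "y = \<theta> x" by blast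
    show "y \<in> V"
    proof (cases "x = j0")
      case True then show ?thesis using x p unfolding \<theta>_def by simp
    next
      case False
      show ?thesis
      proof (cases "x \<in> D")
        case True then show ?thesis using x False f1N[of x] N'1 N unfolding \<theta>_def by auto
      next
        case nD: False then show ?thesis using x False f2B[of x] inA[of x] BN(3)[of "f2 x"] unfolding \<theta>_def by auto
      qed
    qed
  qed
  have "\<theta> ` V = V" using fin sub inj by (rule endo_inj_surj)
  then have "bij_betw \<theta> V V" using inj unfolding bij_betw_def by simp
  moreover have "\<theta> j0 = p" unfolding \<theta>_def by simp
  moreover have "\<theta> ` D \<subseteq> N"
  proof
    fix y assume "y \<in> \<theta> ` D"
    then obtain x where "x \<in> D" "y = \<theta> x" by blast
    then show "y \<in> N" using j0D f1N[of x] N'1 unfolding \<theta>_def by auto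
  qed
  ultimately show ?thesis by blast
qed

definition rinv :: "'a set set \<Rightarrow> nat \<Rightarrow> 'a \<Rightarrow> 'a set set \<Rightarrow> ('a \<Rightarrow> nat) \<Rightarrow> bool" where
  "rinv E M a R col \<longleftrightarrow> R \<subseteq> E \<and> (\<forall>u u'. {u,u'} \<in> R \<longrightarrow> col u mod M \<noteq> col u' mod M) \<and>
     (\<forall>e\<in>R. \<forall>v\<in>e. (a,v) \<in> (adj_rel R)\<^sup>*)"

lemma route_ext:
  fixes M :: nat
  assumes g: "graph V E" and M: "M \<ge> 2" and path: "(u0, w) \<in> (adj_rel E)\<^sup>*"
    and inv: "rinv E M a R col" and st: "(a,u0) \<in> (adj_rel R)\<^sup>*"
  shows "\<exists>R' col'. rinv E M a R' col' \<and> R \<subseteq> R' \<and> (a,w) \<in> (adj_rel R')\<^sup>*"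
  using path
proof (induction rule: rtrancl_induct)
  case base then show ?case using inv st by blast
next
  case (step w w')
  obtain R1 col1 where i1: "rinv E M a R1 col1" and s1: "R \<subseteq> R1" and r1: "(a,w) \<in> (adj_rel R1)\<^sup>*"
    using step.IH by blast
  have ww: "{w,w'} \<in> E" using step.hyps(2) by (simp add: adj_rel_def)
  have wne: "w \<noteq> w'" using graph_edge_in[OF g ww] by simp
  show ?case
  proof (cases "(a,w') \<in> (adj_rel R1)\<^sup>*")
    case True then show ?thesis using i1 s1 by blast
  next
    case False
    define R2 where "R2 = insert {w,w'} R1"
    define col2 where "col2 = col1(w' := Suc (col1 w))"
    have R12: "R1 \<subseteq> R2" unfolding R2_def by blast
    have c1: "\<forall>e\<in>R1. \<forall>v\<in>e. (a,v) \<in> (adj_rel R1)\<^sup>*" using i1 unfolding rinv_def by blast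
    have p1: "\<forall>u u'. {u,u'} \<in> R1 \<longrightarrow> col1 u mod M \<noteq> col1 u' mod M" using i1 unfolding rinv_def by blast
    have rw: "(a,w) \<in> (adj_rel R2)\<^sup>*" using rtr_mono[OF R12 r1] .
    have rw': "(a,w') \<in> (adj_rel R2)\<^sup>*"
      using rtr_edge[OF rw] unfolding R2_def by blast
    have "R2 \<subseteq> E" using i1 ww unfolding rinv_def R2_def by blast
    moreover have "\<forall>u u'. {u,u'} \<in> R2 \<longrightarrow> col2 u mod M \<noteq> col2 u' mod M"
    proof (intro allI impI)
      fix u u' assume uu: "{u,u'} \<in> R2"
      show "col2 u mod M \<noteq> col2 u' mod M"
      proof (cases "{u,u'} = {w,w'}")
        case True
        then have "(u = w \<and> u' = w') \<or> (u = w' \<and> u' = w)" by (simp add: doubleton_eq_iff)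
        then show ?thesis using wne suc_mod_ne[OF M, of "col1 w"] unfolding col2_def by auto
      next
        case False
        then have in1: "{u,u'} \<in> R1" using uu unfolding R2_def by simp
        then have "(a,u) \<in> (adj_rel R1)\<^sup>*" "(a,u') \<in> (adj_rel R1)\<^sup>*" using c1 by auto
        then have "u \<noteq> w'" "u' \<noteq> w'" using \<open>(a,w') \<notin> (adj_rel R1)\<^sup>*\<close> by auto
        then show ?thesis using p1 in1 unfolding col2_def by simp
      qed
    qed
    moreover have "\<forall>e\<in>R2. \<forall>v\<in>e. (a,v) \<in> (adj_rel R2)\<^sup>*"
    proof (intro ballI)
      fix e v assume e: "e \<in> R2" and v: "v \<in> e"
      show "(a,v) \<in> (adj_rel R2)\<^sup>*"
      proof (cases "e \<in> R1")
        case True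
        then have "(a,v) \<in> (adj_rel R1)\<^sup>*" using c1 v by blast
        then show ?thesis by (rule rtr_mono[OF R12])
      next
        case False
        then have "e = {w,w'}" using e unfolding R2_def by simp
        then have "v = w \<or> v = w'" using v by simp
        then show ?thesis using rw rw' by blast
      qed
    qed
    ultimately have "rinv E M a R2 col2" unfolding rinv_def by blast
    moreover have "R \<subseteq> R2" using s1 R12 by blast
    ultimately show ?thesis using rw' by blast
  qed
qed

lemma route_exists:
  fixes M :: nat
  assumes g: "graph V E" and M: "M \<ge> 2" and ab: "(a,b) \<in> (adj_rel E)\<^sup>*" and ac: "(a,c) \<in> (adj_rel E)\<^sup>*"
  shows "\<exists>R col. R \<subseteq> E \<and> (\<forall>u u'. {u,u'} \<in> R \<longrightarrow> col u mod M \<noteq> col u' mod M) \<and>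
     (a,b) \<in> (adj_rel R)\<^sup>* \<and> (a,c) \<in> (adj_rel R)\<^sup>*"
proof -
  have "rinv E M a {} (\<lambda>_. 0)" unfolding rinv_def by simp
  then obtain R1 col1 where i1: "rinv E M a R1 col1" and r1: "(a,b) \<in> (adj_rel R1)\<^sup>*"
    using route_ext[OF g M ab, of a "{}" "\<lambda>_. 0"] by blast
  obtain R2 col2 where i2: "rinv E M a R2 col2" and s2: "R1 \<subseteq> R2" and r2: "(a,c) \<in> (adj_rel R2)\<^sup>*"
    using route_ext[OF g M ac i1] by blast
  have "(a,b) \<in> (adj_rel R2)\<^sup>*" by (rule rtr_mono[OF s2 r1])
  then show ?thesis using i2 r2 unfolding rinv_def by blast
qed



definition liftE :: "('a \<Rightarrow> 'b) \<Rightarrow> 'a set set \<Rightarrow> ('a \<times> 'b) set set" where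
  "liftE h Q = {{(u, h u), (u', h u')} | u u'. {u,u'} \<in> Q}"

lemma liftE_reach:
  assumes "(s,w) \<in> (adj_rel Q)\<^sup>*" "liftE h Q \<subseteq> Q'"
  shows "((s, h s), (w, h w)) \<in> (adj_rel Q')\<^sup>*"
  using assms(1)
proof (induction rule: rtrancl_induct)
  case base then show ?case by simp
next
  case (step v w)
  have "{v,w} \<in> Q" using step.hyps(2) by (simp add: adj_rel_def)
  then have "{(v, h v), (w, h w)} \<in> liftE h Q" unfolding liftE_def by blast
  then have "{(v, h v), (w, h w)} \<in> Q'" using assms(2) by blast
  then show ?case by (rule rtr_edge[OF step.IH])
qed

lemma pair_dbl:
  assumes "{(u,s),(u',t)} = {(v,s'),(v',t')}" "u \<noteq> u'"
  shows "(u=v \<and> s=s' \<and> u'=v' \<and> t=t') \<or> (u=v' \<and> s=t' \<and> u'=v \<and> t=s')"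
  using assms by (auto simp: doubleton_eq_iff)

lemma pair_dbl_layer:
  assumes "{(u,s),(u',t)} = {(w,s'),(w,t')}"
  shows "u = u'"
  using assms by (auto simp: doubleton_eq_iff)

lemma lexE_G:
  assumes "graph VG EG" "{u,u'} \<in> EG" "v \<in> VH" "v' \<in> VH"
  shows "{(u,v),(u',v')} \<in> lex_E VG EG VH EH"
  using graph_edge_in[OF assms(1,2)] assms(2-4) unfolding lex_E_def by blast

lemma lexE_H:
  assumes "u \<in> VG" "{v,v'} \<in> EH" "v \<in> VH" "v' \<in> VH"
  shows "{(u,v),(u,v')} \<in> lex_E VG EG VH EH"
  using assms unfolding lex_E_def by blast

lemma lexE_edges:
  assumes gG: "graph VG EG" and gH: "graph VH EH"
  shows "\<forall>e\<in>lex_E VG EG VH EH. \<exists>u v. e = {u,v} \<and> u \<noteq> v \<and> u \<in> lex_V VG VH \<and> v \<in> lex_V VG VH"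
proof
  fix e assume "e \<in> lex_E VG EG VH EH"
  then obtain u v u' v' where e: "e = {(u, v), (u', v')}" and m: "u \<in> VG" "u' \<in> VG" "v \<in> VH" "v' \<in> VH"
    and o: "{u, u'} \<in> EG \<or> (u = u' \<and> {v, v'} \<in> EH)" unfolding lex_E_def by blast
  have "(u,v) \<noteq> (u',v')"
    using o graph_edge_in[OF gG, of u u'] graph_edge_in[OF gH, of v v'] by auto
  then show "\<exists>a b. e = {a,b} \<and> a \<noteq> b \<and> a \<in> lex_V VG VH \<and> b \<in> lex_V VG VH"
    using e m unfolding lex_V_def by blast
qed

lemma lexE_finite:
  assumes "finite VG" "finite VH"
  shows "finite (lex_E VG EG VH EH)"
proof -
  have "lex_E VG EG VH EH \<subseteq> Pow (VG \<times> VH)" unfolding lex_E_def by auto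
  moreover have "finite (Pow (VG \<times> VH))" using assms by simp
  ultimately show ?thesis by (rule finite_subset)
qed

lemma l2_le_deg:
  assumes g: "graph V E" and c3: "card V \<ge> 3" and v: "v \<in> V"
  shows "lambda3 V E \<le> card {w. {v,w} \<in> E}"
proof -
  have fin: "finite V" using g unfolding graph_def by simp
  have "card (V - {v}) \<ge> 2" using c3 fin v by simp
  then obtain T where T: "T \<subseteq> V - {v}" "card T = 2" "finite T" by (meson obtain_subset_with_card_n)
  then obtain s t where st: "T = {s,t}" "s \<noteq> t" by (meson card_2_iff)
  have S3: "card {v,s,t} = 3" using st T by auto
  have Ssub: "{v,s,t} \<subseteq> V" using st T v by auto
  have "lambda3 V E \<le> lambda_S V E {v,s,t}" by (rule lambda3_le[OF g Ssub S3])
  also have "\<dots> \<le> card {w. {v,w} \<in> E}"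
    using lambdaS_props[OF g, of v "{v,s,t}" s] st T by auto
  finally show ?thesis .
qed



theorem lemma3p3:
  fixes VG :: "'a set" and EG :: "'a set set" and VH :: "'b set" and EH :: "'b set set"
    and x y z :: "'a \<times> 'b"
  assumes "graph VG EG" and "connected_graph VG EG" and "card VG \<ge> 3"
    and "graph VH EH" and "connected_graph VH EH" and "card VH \<ge> 3"
    and "x \<in> lex_V VG VH" and "y \<in> lex_V VG VH" and "z \<in> lex_V VG VH"
    and "fst x \<noteq> fst y" and "fst y \<noteq> fst z" and "fst x \<noteq> fst z"
  shows "has_edge_disjoint_S_trees (lex_V VG VH) (lex_E VG EG VH EH) {x, y, z}
           (lambda3 VH EH + lambda3 VG EG * card VH)"
proof -
  note gG = assms(1) and gH = assms(4)
  obtain a p where x: "x = (a,p)" by (cases x)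
  obtain b q where y: "y = (b,q)" by (cases y)
  obtain c r where z: "z = (c,r)" by (cases z)
  have aV: "a \<in> VG" "p \<in> VH" using assms(7) x unfolding lex_V_def by auto
  have bV: "b \<in> VG" "q \<in> VH" using assms(8) y unfolding lex_V_def by auto
  have cV: "c \<in> VG" "r \<in> VH" using assms(9) z unfolding lex_V_def by auto
  have ab: "a \<noteq> b" "b \<noteq> c" "a \<noteq> c" using assms(10-12) x y z by auto
  have finG: "finite VG" using gG unfolding graph_def by simp
  have finH: "finite VH" using gH unfolding graph_def by simp
  define n where "n = card VH"
  define l1 where "l1 = lambda3 VG EG"
  define l2 where "l2 = lambda3 VH EH"
  have n3: "n \<ge> 3" using assms(6) n_def by simp

  have c3: "card {a,b,c} = 3" using ab by simp
  have Gsub: "{a,b,c} \<subseteq> VG" using aV bV cV by simp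
  have l1le: "l1 \<le> lambda_S VG EG {a,b,c}" unfolding l1_def by (rule lambda3_le[OF gG Gsub c3])
  have "has_edge_disjoint_S_trees VG EG {a,b,c} (lambda_S VG EG {a,b,c})"
    using lambdaS_props[OF gG, of a "{a,b,c}" b] ab by simp
  then have "has_edge_disjoint_S_trees VG EG {a,b,c} l1" using l1le by (rule has_mono)
  then have "\<exists>T :: nat \<Rightarrow> 'a set \<times> 'a set set. (\<forall>i<l1. S_tree VG EG {a,b,c} (fst (T i)) (snd (T i))) \<and>
        (\<forall>i<l1. \<forall>j<l1. i \<noteq> j \<longrightarrow> snd (T i) \<inter> snd (T j) = {})"
    unfolding has_edge_disjoint_S_trees_def .
  then obtain TG :: "nat \<Rightarrow> 'a set \<times> 'a set set" where
    TG1: "\<forall>i<l1. S_tree VG EG {a,b,c} (fst (TG i)) (snd (TG i))"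
    and TG2: "\<forall>i<l1. \<forall>j<l1. i \<noteq> j \<longrightarrow> snd (TG i) \<inter> snd (TG j) = {}" by blast
  define A where "A t = snd (TG t)" for t
  have A_E: "A t \<subseteq> EG" if "t < l1" for t
    using TG1 that unfolding A_def S_tree_def subgraph_def by blast
  have A_disj: "t = t'" if "t < l1" "t' < l1" "e \<in> A t" "e \<in> A t'" for t t' e
  proof (rule ccontr)
    assume "t \<noteq> t'"
    then have "A t \<inter> A t' = {}" using TG2 that(1,2) unfolding A_def by simp
    then show False using that(3,4) by blast
  qed
  have A_info: "connected_graph (fst (TG t)) (A t) \<and> a \<in> fst (TG t) \<and> b \<in> fst (TG t) \<and> c \<in> fst (TG t)"
    if "t < l1" for t
    using TG1 that unfolding A_def S_tree_def by simp
  have A_reach: "(u,w) \<in> (adj_rel (A t))\<^sup>*" if "t < l1" "u \<in> {a,b,c}" "w \<in> {a,b,c}" for t u w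
  proof -
    have "\<forall>u\<in>fst (TG t). \<forall>w\<in>fst (TG t). (u,w) \<in> (adj_rel (A t))\<^sup>*"
      using A_info[OF that(1)] unfolding connected_graph_def by simp
    moreover have "u \<in> fst (TG t)" "w \<in> fst (TG t)" using A_info[OF that(1)] that(2,3) by auto
    ultimately show ?thesis by simp
  qed
  define na where "na t = (SOME w. {a,w} \<in> A t)" for t
  define nb where "nb t = (SOME w. {b,w} \<in> A t)" for t
  define nc where "nc t = (SOME w. {c,w} \<in> A t)" for t
  have nbr: "{a, na t} \<in> A t \<and> {b, nb t} \<in> A t \<and> {c, nc t} \<in> A t" if "t < l1" for t
  proof -
    have C: "connected_graph (fst (TG t)) (A t)" and m: "a \<in> fst (TG t)" "b \<in> fst (TG t)" "c \<in> fst (TG t)"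
      using A_info[OF that] by auto
    have "\<exists>w. {a,w} \<in> A t" using C m(1) m(2) ab(1) by (rule edge_at)
    then have 1: "{a, na t} \<in> A t" unfolding na_def by (rule someI_ex)
    have "\<exists>w. {b,w} \<in> A t" using C m(2) m(3) ab(2) by (rule edge_at)
    then have 2: "{b, nb t} \<in> A t" unfolding nb_def by (rule someI_ex)
    have "c \<noteq> a" using ab by simp
    have "\<exists>w. {c,w} \<in> A t" using C m(3) m(1) \<open>c \<noteq> a\<close> by (rule edge_at)
    then have 3: "{c, nc t} \<in> A t" unfolding nc_def by (rule someI_ex)
    show ?thesis using 1 2 3 by simp
  qed

  define Np where "Np = {w. {p,w} \<in> EH}"
  define Nq where "Nq = {w. {q,w} \<in> EH}"
  define Nr where "Nr = {w. {r,w} \<in> EH}"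
  have l2p: "l2 \<le> card Np" unfolding l2_def Np_def by (rule l2_le_deg[OF gH assms(6) aV(2)])
  have l2q: "l2 \<le> card Nq" unfolding l2_def Nq_def by (rule l2_le_deg[OF gH assms(6) bV(2)])
  have l2r: "l2 \<le> card Nr" unfolding l2_def Nr_def by (rule l2_le_deg[OF gH assms(6) cV(2)])
  have Nsub: "Np \<subseteq> VH - {p}" "Nq \<subseteq> VH - {q}" "Nr \<subseteq> VH - {r}"
    unfolding Np_def Nq_def Nr_def using graph_edge_in[OF gH] by blast+
  define M where "M = card (VH - {p})"
  have M_eq: "M = n - 1" unfolding M_def n_def using finH aV(2) by simp
  have M2: "M \<ge> 2" using M_eq n3 by simp
  have l2M: "l2 \<le> M"
  proof -
    have "card Np \<le> card (VH - {p})" using Nsub(1) finH by (simp add: card_mono)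
    then show ?thesis using l2p unfolding M_def by simp
  qed
  obtain \<gamma> where \<gamma>: "bij_betw \<gamma> {0..<M} (VH - {p})"
    unfolding M_def using ex_bij_betw_nat_finite[of "VH - {p}"] finH by blast
  have \<gamma>in0: "\<gamma> i \<in> VH - {p}" if "i < M" for i
    using bij_betwE[OF \<gamma>] that by simp
  have \<gamma>in: "\<gamma> i \<in> VH" "\<gamma> i \<noteq> p" if "i < M" for i
    using \<gamma>in0[OF that] by simp_all
  have \<gamma>i: "inj_on \<gamma> {0..<M}" using \<gamma> by (rule bij_betw_imp_inj_on)
  have \<gamma>inj: "i = i'" if "i < M" "i' < M" "\<gamma> i = \<gamma> i'" for i i'
    using inj_onD[OF \<gamma>i that(3)] that(1,2) by simp

  have GC: "\<forall>u\<in>VG. \<forall>w\<in>VG. (u,w) \<in> (adj_rel EG)\<^sup>*" using assms(2) unfolding connected_graph_def by simp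
  have "\<exists>R col. R \<subseteq> EG \<and> (\<forall>u u'. {u,u'} \<in> R \<longrightarrow> col u mod M \<noteq> col u' mod M) \<and>
     (a,b) \<in> (adj_rel R)\<^sup>* \<and> (a,c) \<in> (adj_rel R)\<^sup>*"
  proof -
    have "(a,b) \<in> (adj_rel EG)\<^sup>*" using GC aV(1) bV(1) by simp
    moreover have "(a,c) \<in> (adj_rel EG)\<^sup>*" using GC aV(1) cV(1) by simp
    ultimately show ?thesis by (rule route_exists[OF gG M2])
  qed
  then obtain R col where R_E: "R \<subseteq> EG" and R_prop: "\<forall>u u'. {u,u'} \<in> R \<longrightarrow> col u mod M \<noteq> col u' mod M"
    and R_ab: "(a,b) \<in> (adj_rel R)\<^sup>*" and R_ac: "(a,c) \<in> (adj_rel R)\<^sup>*" by blast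

  define idx where "idx u k = (k + col u) mod M" for u k
  have idxM: "idx u k < M" for u k unfolding idx_def using M2 by simp
  define D where "D u = \<gamma> ` (idx u ` {0..<l2})" for u
  have D_sub: "D u \<subseteq> VH - {p}" for u unfolding D_def using \<gamma>in idxM by blast
  have D_card: "card (D u) \<le> l2" for u
  proof -
    have "card (D u) \<le> card (idx u ` {0..<l2})" unfolding D_def by (rule card_image_le) simp
    also have "\<dots> \<le> card {0..<l2}" by (rule card_image_le) simp
    finally show ?thesis by simp
  qed
  obtain \<theta>a where \<theta>a: "bij_betw \<theta>a VH VH" "\<theta>a p = p" "\<theta>a ` D a \<subseteq> Np"
    using bij_extend[OF finH aV(2) aV(2) D_sub[of a] Nsub(1)] D_card[of a] l2p by force
  obtain \<theta>b where \<theta>b: "bij_betw \<theta>b VH VH" "\<theta>b p = q" "\<theta>b ` D b \<subseteq> Nq"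
    using bij_extend[OF finH aV(2) bV(2) D_sub[of b] Nsub(2)] D_card[of b] l2q by force
  obtain \<theta>c where \<theta>c: "bij_betw \<theta>c VH VH" "\<theta>c p = r" "\<theta>c ` D c \<subseteq> Nr"
    using bij_extend[OF finH aV(2) cV(2) D_sub[of c] Nsub(3)] D_card[of c] l2r by force
  define \<theta> where "\<theta> u = (if u = a then \<theta>a else if u = b then \<theta>b else if u = c then \<theta>c else id)" for u
  have \<theta>bij: "bij_betw (\<theta> u) VH VH" for u
    unfolding \<theta>_def using \<theta>a(1) \<theta>b(1) \<theta>c(1) by (simp add: bij_betw_id)
  have \<theta>in: "\<theta> u j \<in> VH" if "j \<in> VH" for u j using \<theta>bij[of u] that bij_betwE by blast
  have \<theta>inj: "j = j'" if "j \<in> VH" "j' \<in> VH" "\<theta> u j = \<theta> u j'" for u j j'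
    using \<theta>bij[of u] that unfolding bij_betw_def inj_on_def by blast
  have \<theta>abc: "\<theta> a p = p" "\<theta> b p = q" "\<theta> c p = r"
    unfolding \<theta>_def using \<theta>a(2) \<theta>b(2) \<theta>c(2) ab by auto
  define g where "g k u = \<theta> u (\<gamma> (idx u k))" for k u
  have g_in: "g k u \<in> VH" for k u unfolding g_def using \<theta>in \<gamma>in idxM by blast
  have g_nep: "g k u \<noteq> \<theta> u p" for k u
  proof
    assume "g k u = \<theta> u p"
    then have "\<gamma> (idx u k) = p" using \<theta>inj[of "\<gamma> (idx u k)" p u] \<gamma>in[OF idxM] aV(2) unfolding g_def by blast
    then show False using \<gamma>in(2)[OF idxM] by blast
  qed
  have g_inj: "k = k'" if "k < l2" "k' < l2" "g k u = g k' u" for k k' u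
  proof -
    have "\<gamma> (idx u k) = \<gamma> (idx u k')" using that(3) \<theta>inj \<gamma>in(1)[OF idxM] unfolding g_def by blast
    then have "idx u k = idx u k'" using \<gamma>inj idxM by blast
    then show ?thesis using mod_cancel_k[of k M k' "col u"] that(1,2) l2M unfolding idx_def by simp
  qed
  have g_diag: False if "{u,u'} \<in> R" "j \<in> VH" "g k u = \<theta> u j" "g k u' = \<theta> u' j" for u u' j k
  proof -
    have "\<gamma> (idx u k) = j" using that(2,3) \<theta>inj \<gamma>in(1)[OF idxM] unfolding g_def by blast
    moreover have "\<gamma> (idx u' k) = j" using that(2,4) \<theta>inj \<gamma>in(1)[OF idxM] unfolding g_def by blast
    ultimately have "idx u k = idx u' k" using \<gamma>inj idxM by metis
    then have "col u mod M = col u' mod M" unfolding idx_def by (rule mod_cancel_c)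
    then show False using R_prop that(1) by blast
  qed
  have g_N: "{p, g k a} \<in> EH \<and> {q, g k b} \<in> EH \<and> {r, g k c} \<in> EH" if "k < l2" for k
  proof -
    have "\<gamma> (idx a k) \<in> D a" "\<gamma> (idx b k) \<in> D b" "\<gamma> (idx c k) \<in> D c" unfolding D_def using that by auto
    then have "\<theta>a (\<gamma> (idx a k)) \<in> Np" "\<theta>b (\<gamma> (idx b k)) \<in> Nq" "\<theta>c (\<gamma> (idx c k)) \<in> Nr"
      using \<theta>a(3) \<theta>b(3) \<theta>c(3) by blast+
    then show ?thesis unfolding g_def \<theta>_def Np_def Nq_def Nr_def using ab by auto
  qed
  have xyz: "x = (a, \<theta> a p)" "y = (b, \<theta> b p)" "z = (c, \<theta> c p)" using x y z \<theta>abc by auto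

  define FX where "FX k = liftE (g k) R \<union> {{(w, \<theta> w p), (w, g k w)} | w. w \<in> {a,b,c}}" for k
  define W where "W t j = {{(u, \<theta> u i), (u', \<theta> u' j)} | u u' i. {u,u'} \<in> A t \<and> (i = j \<or> i = p)}" for t j
  have R_ne: "u \<noteq> u'" if "{u,u'} \<in> R" for u u' using graph_edge_in[OF gG] R_E that by blast
  have A_ne: "u \<noteq> u'" if "t < l1" "{u,u'} \<in> A t" for t u u' using graph_edge_in[OF gG] A_E[OF that(1)] that(2) by blast

  have FX_lex: "FX k \<subseteq> lex_E VG EG VH EH" if "k < l2" for k
  proof
    fix e assume "e \<in> FX k"
    then consider (L) u u' where "e = {(u, g k u), (u', g k u')}" "{u,u'} \<in> R"
      | (H) w where "e = {(w, \<theta> w p), (w, g k w)}" "w \<in> {a,b,c}"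
      unfolding FX_def liftE_def by blast
    then show "e \<in> lex_E VG EG VH EH"
    proof cases
      case (L u u')
      have "{u,u'} \<in> EG" using L(2) R_E by blast
      then show ?thesis using L(1) lexE_G[OF gG _ g_in g_in] by blast
    next
      case (H w)
      have wV: "w \<in> VG" using H(2) aV bV cV by blast
      have "{\<theta> w p, g k w} \<in> EH" using H(2) g_N[OF that] \<theta>abc by auto
      then show ?thesis using H(1) lexE_H[OF wV _ \<theta>in[OF aV(2)] g_in] by blast
    qed
  qed
  have FX_conn: "(x,y) \<in> (adj_rel (FX k))\<^sup>* \<and> (x,z) \<in> (adj_rel (FX k))\<^sup>*" for k
  proof -
    have LF: "liftE (g k) R \<subseteq> FX k" unfolding FX_def by blast
    have eX: "{x, (a, g k a)} \<in> FX k" unfolding FX_def xyz by blast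
    have eY: "{y, (b, g k b)} \<in> FX k" unfolding FX_def xyz by blast
    have eZ: "{z, (c, g k c)} \<in> FX k" unfolding FX_def xyz by blast
    have r1: "(x, (a, g k a)) \<in> (adj_rel (FX k))\<^sup>*" by (rule rtr_edge[OF rtrancl_refl eX])
    have r2: "((a, g k a), (b, g k b)) \<in> (adj_rel (FX k))\<^sup>*" by (rule liftE_reach[OF R_ab LF])
    have r3: "((a, g k a), (c, g k c)) \<in> (adj_rel (FX k))\<^sup>*" by (rule liftE_reach[OF R_ac LF])
    have "(x, (b, g k b)) \<in> (adj_rel (FX k))\<^sup>*" using r1 r2 by (rule rtrancl_trans)
    then have "(x,y) \<in> (adj_rel (FX k))\<^sup>*" using eY by (rule rtr_edge')
    moreover have "(x, (c, g k c)) \<in> (adj_rel (FX k))\<^sup>*" using r1 r3 by (rule rtrancl_trans)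
    then have "(x,z) \<in> (adj_rel (FX k))\<^sup>*" using eZ by (rule rtr_edge')
    ultimately show ?thesis by simp
  qed

  have W_lex: "W t j \<subseteq> lex_E VG EG VH EH" if "t < l1" "j \<in> VH" for t j
  proof
    fix e assume "e \<in> W t j"
    then obtain u u' i where e: "e = {(u, \<theta> u i), (u', \<theta> u' j)}" "{u,u'} \<in> A t" "i = j \<or> i = p"
      unfolding W_def by blast
    have "i \<in> VH" using e(3) that(2) aV(2) by auto
    moreover have "{u,u'} \<in> EG" using e(2) A_E[OF that(1)] by blast
    ultimately show "e \<in> lex_E VG EG VH EH" using e(1) lexE_G[OF gG _ \<theta>in \<theta>in] that(2) by blast
  qed
  have W_conn: "(x,y) \<in> (adj_rel (W t j))\<^sup>* \<and> (x,z) \<in> (adj_rel (W t j))\<^sup>*" if "t < l1" for t j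
  proof -
    define P where "P u = (u, \<theta> u j)" for u
    have LF: "liftE (\<lambda>u. \<theta> u j) (A t) \<subseteq> W t j" unfolding W_def liftE_def by blast
    have nbr': "{a, na t} \<in> A t" "{b, nb t} \<in> A t" "{c, nc t} \<in> A t" using nbr[OF that] by auto
    have eX: "{x, P (na t)} \<in> W t j" unfolding W_def xyz P_def using nbr'(1) by blast
    have eY: "{y, P (nb t)} \<in> W t j" unfolding W_def xyz P_def using nbr'(2) by blast
    have eZ: "{z, P (nc t)} \<in> W t j" unfolding W_def xyz P_def using nbr'(3) by blast
    have lr: "(P u, P w) \<in> (adj_rel (W t j))\<^sup>*" if "(u,w) \<in> (adj_rel (A t))\<^sup>*" for u w
      unfolding P_def by (rule liftE_reach[OF that LF])
    have "(a, na t) \<in> (adj_rel (A t))\<^sup>*" using nbr'(1) by (rule rtr_edge[OF rtrancl_refl])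
    then have "(P a, P (na t)) \<in> (adj_rel (W t j))\<^sup>*" by (rule lr)
    then have q1: "(P (na t), P a) \<in> (adj_rel (W t j))\<^sup>*" by (rule rtr_sym)
    have q0: "(x, P (na t)) \<in> (adj_rel (W t j))\<^sup>*" by (rule rtr_edge[OF rtrancl_refl eX])
    have xa: "(x, P a) \<in> (adj_rel (W t j))\<^sup>*" using q0 q1 by (rule rtrancl_trans)
    have "(a, b) \<in> (adj_rel (A t))\<^sup>*" using A_reach[OF that] by simp
    then have "(a, nb t) \<in> (adj_rel (A t))\<^sup>*" using nbr'(2) by (rule rtr_edge)
    then have "(P a, P (nb t)) \<in> (adj_rel (W t j))\<^sup>*" by (rule lr)
    with xa have "(x, P (nb t)) \<in> (adj_rel (W t j))\<^sup>*" by (rule rtrancl_trans)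
    then have ry: "(x,y) \<in> (adj_rel (W t j))\<^sup>*" using eY by (rule rtr_edge')
    have "(a, c) \<in> (adj_rel (A t))\<^sup>*" using A_reach[OF that] by simp
    then have "(a, nc t) \<in> (adj_rel (A t))\<^sup>*" using nbr'(3) by (rule rtr_edge)
    then have "(P a, P (nc t)) \<in> (adj_rel (W t j))\<^sup>*" by (rule lr)
    with xa have "(x, P (nc t)) \<in> (adj_rel (W t j))\<^sup>*" by (rule rtrancl_trans)
    then have rz: "(x,z) \<in> (adj_rel (W t j))\<^sup>*" using eZ by (rule rtr_edge')
    show ?thesis using ry rz by simp
  qed

  have DX: "k = k'" if "k < l2" "k' < l2" "e \<in> FX k" "e \<in> FX k'" for k k' e
  proof -
    from that(3) consider (L) u u' where "e = {(u, g k u), (u', g k u')}" "{u,u'} \<in> R"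
      | (H) w where "e = {(w, \<theta> w p), (w, g k w)}" "w \<in> {a,b,c}"
      unfolding FX_def liftE_def by blast
    then show ?thesis
    proof cases
      case (L u u')
      have uu: "u \<noteq> u'" using R_ne L(2) .
      from that(4) consider (L2) v v' where "e = {(v, g k' v), (v', g k' v')}" "{v,v'} \<in> R"
        | (H2) w where "e = {(w, \<theta> w p), (w, g k' w)}" "w \<in> {a,b,c}"
        unfolding FX_def liftE_def by blast
      then show ?thesis
      proof cases
        case (L2 v v')
        have "(u=v \<and> g k u = g k' v \<and> u'=v' \<and> g k u' = g k' v') \<or> (u=v' \<and> g k u = g k' v' \<and> u'=v \<and> g k u' = g k' v)"
          using pair_dbl[OF _ uu] L(1) L2(1) by metis
        then have "g k u = g k' u" by auto
        then show ?thesis using g_inj that(1,2) by blast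
      next
        case (H2 w)
        have "u = u'" using pair_dbl_layer L(1) H2(1) by metis
        then show ?thesis using uu by simp
      qed
    next
      case (H w)
      from that(4) consider (L2) v v' where "e = {(v, g k' v), (v', g k' v')}" "{v,v'} \<in> R"
        | (H2) w' where "e = {(w', \<theta> w' p), (w', g k' w')}" "w' \<in> {a,b,c}"
        unfolding FX_def liftE_def by blast
      then show ?thesis
      proof cases
        case (L2 v v')
        have "v = v'" using pair_dbl_layer L2(1) H(1) by metis
        then show ?thesis using R_ne L2(2) by blast
      next
        case (H2 w')
        have "(w = w' \<and> \<theta> w p = \<theta> w' p \<and> g k w = g k' w') \<or> (w = w' \<and> \<theta> w p = g k' w' \<and> g k w = \<theta> w' p)"
          using H(1) H2(1) by (auto simp: doubleton_eq_iff)
        then have "g k w = g k' w" using g_nep by metis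
        then show ?thesis using g_inj that(1,2) by blast
      qed
    qed
  qed
  have DXL: False if "k < l2" "t < l1" "j \<in> VH" "e \<in> FX k" "e \<in> W t j" for k t j e
  proof -
    obtain v v' i where e2: "e = {(v, \<theta> v i), (v', \<theta> v' j)}" "{v,v'} \<in> A t" "i = j \<or> i = p"
      using \<open>e \<in> W t j\<close> unfolding W_def by blast
    have vv: "v \<noteq> v'" using A_ne[OF that(2) e2(2)] .
    from that(4) consider (L) u u' where "e = {(u, g k u), (u', g k u')}" "{u,u'} \<in> R"
      | (H) w where "e = {(w, \<theta> w p), (w, g k w)}" "w \<in> {a,b,c}"
      unfolding FX_def liftE_def by blast
    then show False
    proof cases
      case (L u u')
      have uu: "u \<noteq> u'" using R_ne L(2) .
      have "(u=v \<and> g k u = \<theta> v i \<and> u'=v' \<and> g k u' = \<theta> v' j) \<or> (u=v' \<and> g k u = \<theta> v' j \<and> u'=v \<and> g k u' = \<theta> v i)"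
        using pair_dbl[OF _ uu] L(1) e2(1) by metis
      then show False
      proof
        assume h: "u=v \<and> g k u = \<theta> v i \<and> u'=v' \<and> g k u' = \<theta> v' j"
        have "i \<noteq> p" using h g_nep[of k u] by auto
        then have "i = j" using e2(3) by simp
        then show False using g_diag[OF L(2) that(3), of k] h by auto
      next
        assume h: "u=v' \<and> g k u = \<theta> v' j \<and> u'=v \<and> g k u' = \<theta> v i"
        have "i \<noteq> p" using h g_nep[of k u'] by auto
        then have "i = j" using e2(3) by simp
        then show False using g_diag[OF L(2) that(3), of k] h by auto
      qed
    next
      case (H w)
      have "v = v'" using pair_dbl_layer e2(1) H(1) by metis
      then show False using vv by simp
    qed
  qed
  have DL: "t = t' \<and> j = j'" if "t < l1" "t' < l1" "j \<in> VH" "j' \<in> VH" "e \<in> W t j" "e \<in> W t' j'"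
    for t t' j j' e
  proof -
    obtain u u' i where e1: "e = {(u, \<theta> u i), (u', \<theta> u' j)}" "{u,u'} \<in> A t" "i = j \<or> i = p"
      using \<open>e \<in> W t j\<close> unfolding W_def by blast
    obtain v v' i' where e2: "e = {(v, \<theta> v i'), (v', \<theta> v' j')}" "{v,v'} \<in> A t'" "i' = j' \<or> i' = p"
      using \<open>e \<in> W t' j'\<close> unfolding W_def by blast
    have uu: "u \<noteq> u'" using A_ne[OF that(1) e1(2)] .
    have iV: "i \<in> VH" "i' \<in> VH" using e1(3) e2(3) that(3,4) aV(2) by auto
    have "(u=v \<and> \<theta> u i = \<theta> v i' \<and> u'=v' \<and> \<theta> u' j = \<theta> v' j') \<or> (u=v' \<and> \<theta> u i = \<theta> v' j' \<and> u'=v \<and> \<theta> u' j = \<theta> v i')"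
      using pair_dbl[OF _ uu] e1(1) e2(1) by metis
    then show ?thesis
    proof
      assume h: "u=v \<and> \<theta> u i = \<theta> v i' \<and> u'=v' \<and> \<theta> u' j = \<theta> v' j'"
      then have "\<theta> u' j = \<theta> u' j'" by auto
      then have "j = j'" using \<theta>inj that(3,4) by blast
      moreover have "{v,v'} = {u,u'}" using h by auto
      then have "t = t'" using A_disj[OF that(1,2) e1(2)] e2(2) by simp
      ultimately show ?thesis by simp
    next
      assume h: "u=v' \<and> \<theta> u i = \<theta> v' j' \<and> u'=v \<and> \<theta> u' j = \<theta> v i'"
      then have "\<theta> u i = \<theta> u j'" "\<theta> u' j = \<theta> u' i'" by auto
      then have "i = j'" "j = i'" using \<theta>inj iV that(3,4) by blast+
      moreover have "{v,v'} = {u,u'}" using h by auto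
      then have "t = t'" using A_disj[OF that(1,2) e1(2)] e2(2) by simp
      ultimately show ?thesis using e1(3) e2(3) by auto
    qed
  qed

  have n0: "n > 0" using n3 by simp
  obtain en where en: "bij_betw en {0..<n} VH" unfolding n_def using ex_bij_betw_nat_finite[OF finH] by blast
  have enV: "en s \<in> VH" if "s < n" for s using bij_betwE[OF en] that by simp
  have eninj: "inj_on en {0..<n}" using en by (rule bij_betw_imp_inj_on)
  define F where "F i = (if i < l2 then FX i else W ((i - l2) div n) (en ((i - l2) mod n)))" for i
  define K where "K = l2 + l1 * n"
  have idx_t: "(i - l2) div n < l1" if "i < K" "\<not> i < l2" for i
  proof -
    have "i - l2 < l1 * n" using that unfolding K_def by simp
    then show ?thesis by (rule less_mult_imp_div_less)
  qed
  have idx_s: "(i - l2) mod n < n" for i using n0 by simp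
  have Fprops: "F i \<subseteq> lex_E VG EG VH EH \<and> (x,y) \<in> (adj_rel (F i))\<^sup>* \<and> (x,z) \<in> (adj_rel (F i))\<^sup>*"
    if "i < K" for i
  proof (cases "i < l2")
    case True then show ?thesis using FX_lex[OF True] FX_conn[of i] unfolding F_def by simp
  next
    case False
    have "W ((i - l2) div n) (en ((i - l2) mod n)) \<subseteq> lex_E VG EG VH EH"
      by (rule W_lex[OF idx_t[OF that False] enV[OF idx_s]])
    then show ?thesis using W_conn[OF idx_t[OF that False]] False unfolding F_def by simp
  qed
  have Fdisj: "F i \<inter> F i' = {}" if "i < K" "i' < K" "i \<noteq> i'" for i i'
  proof (rule ccontr)
    assume "F i \<inter> F i' \<noteq> {}"
    then obtain e where e: "e \<in> F i" "e \<in> F i'" by blast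
    show False
    proof (cases "i < l2")
      case T1: True
      show False
      proof (cases "i' < l2")
        case True
        then show False using DX[OF T1 True] e that(3) unfolding F_def using T1 by simp
      next
        case False
        then show False using DXL[OF T1 idx_t[OF that(2) False] enV[OF idx_s]] e T1 unfolding F_def by simp
      qed
    next
      case F1: False
      show False
      proof (cases "i' < l2")
        case True
        then show False using DXL[OF True idx_t[OF that(1) F1] enV[OF idx_s]] e F1 unfolding F_def by simp
      next
        case False
        have "(i - l2) div n = (i' - l2) div n \<and> en ((i - l2) mod n) = en ((i' - l2) mod n)"
          using DL[OF idx_t[OF that(1) F1] idx_t[OF that(2) False] enV[OF idx_s] enV[OF idx_s]] e F1 False
          unfolding F_def by simp
        then have d: "(i - l2) div n = (i' - l2) div n" and m: "(i - l2) mod n = (i' - l2) mod n"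
          using inj_onD[OF eninj] idx_s by auto
        have "i - l2 = i' - l2" using d m by (metis div_mult_mod_eq)
        then show False using F1 False that(3) by simp
      qed
    qed
  qed
  have finE: "finite (lex_E VG EG VH EH)" using finG finH by (rule lexE_finite)
  have tree: "\<exists>P. S_tree (lex_V VG VH) (lex_E VG EG VH EH) {x,y,z} (fst P) (snd P) \<and> snd P \<subseteq> F i"
    if "i < K" for i
  proof -
    have sub: "F i \<subseteq> lex_E VG EG VH EH" and cy: "(x,y) \<in> (adj_rel (F i))\<^sup>*" and cz: "(x,z) \<in> (adj_rel (F i))\<^sup>*"
      using Fprops[OF that] by auto
    have fin: "finite (F i)" using finE sub by (rule rev_finite_subset)
    have all: "\<forall>w\<in>{x,y,z}. (x,w) \<in> (adj_rel (F i))\<^sup>*" using cy cz by simp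
    have "\<exists>V' E'. S_tree (lex_V VG VH) (lex_E VG EG VH EH) {x,y,z} V' E' \<and> E' \<subseteq> F i"
      using fin sub lexE_edges[OF gG gH] assms(7) all by (rule extract_tree) simp
    then obtain V' E' where "S_tree (lex_V VG VH) (lex_E VG EG VH EH) {x,y,z} V' E' \<and> E' \<subseteq> F i" by blast
    then have "S_tree (lex_V VG VH) (lex_E VG EG VH EH) {x,y,z} (fst (V',E')) (snd (V',E')) \<and> snd (V',E') \<subseteq> F i"
      by simp
    then show ?thesis by blast
  qed
  define T where "T i = (SOME P. S_tree (lex_V VG VH) (lex_E VG EG VH EH) {x,y,z} (fst P) (snd P) \<and> snd P \<subseteq> F i)" for i
  have T: "S_tree (lex_V VG VH) (lex_E VG EG VH EH) {x,y,z} (fst (T i)) (snd (T i)) \<and> snd (T i) \<subseteq> F i"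
    if "i < K" for i
    unfolding T_def using tree[OF that] by (rule someI_ex)
  have "has_edge_disjoint_S_trees (lex_V VG VH) (lex_E VG EG VH EH) {x, y, z} K"
    unfolding has_edge_disjoint_S_trees_def
  proof (intro exI conjI allI impI)
    fix i assume "i < K"
    then show "S_tree (lex_V VG VH) (lex_E VG EG VH EH) {x,y,z} (fst (T i)) (snd (T i))" using T by blast
  next
    fix i j assume ij: "i < K" "j < K" "i \<noteq> j"
    have "snd (T i) \<subseteq> F i" "snd (T j) \<subseteq> F j" using T ij(1,2) by blast+
    then show "snd (T i) \<inter> snd (T j) = {}" using Fdisj[OF ij] by blast
  qed
  then show ?thesis unfolding K_def l1_def l2_def n_def .
qed


end
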